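(* Let $\mathcal{Q}$ be a family of Boolean constraints. If there exists a polynomial \texttt{upi} encoding for $\mathcal{Q}$, then there exists a polynomial \texttt{upac} encoding for $\mathcal{Q}$. That is: if there is a polynomial $P$ such that every $q\in\mathcal{Q}$ on $n$ variables has a \texttt{upi} \textsc{cnf} encoding of size at most $P(n)$, then there is a polynomial $P'$ such that every $q\in\mathcal{Q}$ on $n$ variables has a \textsc{cnf} encoding of size at most $P'(n)$ that is both \texttt{upi} and \texttt{upac}.
   Context: Assignments: an assignment of a Boolean variable $v$ is $[v,1]$ (also written $[v]$) or $[v,0]$ (also written $[\neg v]$); for a literal $\omega$, $[\omega]$ is the assignment making $\omega$ true. For a set $V$ of Boolean variables, $\mathcal{A}_V$ is the set of complete non-contradictory assignments on $V$ (exactly one value per variable) and $\mathcal{I}_V$ the set of partial non-contradictory assignments (at most one value per variable). $\mathtt{lit}(V)=\bigcup_{v\in V}\{v,\neg v\}$. The size of a \textsc{cnf} formula is the total number of literal occurrences in its clauses. For a \textsc{cnf} formula $\Sigma$ and an assignment $I$, $\Sigma|_I$ is $\Sigma$ together with the unit clause $(v)$ for each $[v,1]\in I$ and $(\neg v)$ for each $[v,0]\in I$. Unit resolution: given an assignment $U$, a clause $c$ is unit w.r.t. $U$ if $U$ falsifies all literals of $c$ except exactly one, its active literal $\omega$. Unit resolution on $\Sigma$ starts with $U=\emptyset$ and repeatedly adds $[\omega]$ for active literals $\omega$ of unit clauses w.r.t. $U$, until $U$ is contradictory (contains $[v,0]$ and $[v,1]$ for some $v$) or nothing new can be added. It "produces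 the empty clause" iff $U$ becomes contradictory, and "infers $[\omega]$" iff $[\omega]$ is added to $U$. Constraints: a Boolean constraint $q$ on a finite variable set $V$ is any representation of a function $h_q:\mathcal{A}_V\to\{\mathtt{sat},\mathtt{unsat}\}$; $A\in\mathcal{A}_V$ satisfies $q$ iff $h_q(A)=\mathtt{sat}$, otherwise falsifies it. A partial assignment $I\in\mathcal{I}_V$ falsifies $q$ iff every $A\in\mathcal{A}_V$ with $I\subseteq A$ falsifies $q$. A \textsc{cnf} encoding of $q$ is a \textsc{cnf} formula $\Sigma_q$ (possibly with extra variables outside $V$) such that for every $A\in\mathcal{A}_V$, $\Sigma_q|_A$ is satisfiable iff $A$ satisfies $q$. It is \texttt{upi} if for every $I\in\mathcal{I}_V$, unit resolution on $\Sigma_q|_I$ produces the empty clause iff $I$ falsifies $q$. It is \texttt{upac} if for every $I\in\mathcal{I}_V$ that does not falsify $q$ and every literal $\omega\in\mathtt{lit}(V)$ with $[\omega]\notin I$, unit resolution on $\Sigma_q|_I$ does not produce the empty clause, and it infers $[\omega]$ iff $I\cup\{[\neg\omega]\}$ falsifies $q$. An encoding scheme for a family $\mathcal{Q}$ is polynomial if the size of the encoding of each $q\in\mathcal{Q}$ is bounded by a fixed polynomial in the number of variables of $q$. *)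

theory Defs
  imports "HOL-Computational_Algebra.Polynomial"
begin

text \<open>Boolean variables are natural numbers (an infinite supply, so that encodings
may use auxiliary variables outside the constraint's variables).
A literal is a pair (v, b): (v, True) is the literal v, (v, False) is the literal not v.
The assignment [omega] making literal omega true is identified with the pair omega itself;
an assignment is a set of such pairs.\<close>

type_synonym var = nat
type_synonym lit = "var \<times> bool"
type_synonym assignment = "lit set"
type_synonym clause = "lit list"
type_synonym cnf = "clause list"

definition neg_lit :: "lit \<Rightarrow> lit" where
  "neg_lit l = (fst l, \<not> snd l)"

definition lits_of :: "var set \<Rightarrow> lit set" where
  "lits_of V = V \<times> UNIV"

definition contradictory :: "assignment \<Rightarrow> bool" where
  "contradictory U \<longleftrightarrow> (\<exists>v. (v, True) \<in> U \<and> (v, False) \<in> U)"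

definition falsifies_lit :: "assignment \<Rightarrow> lit \<Rightarrow> bool" where
  "falsifies_lit U l \<longleftrightarrow> neg_lit l \<in> U"

definition complete_assignments :: "var set \<Rightarrow> assignment set" where
  "complete_assignments V =
     {A. A \<subseteq> lits_of V \<and> (\<forall>v\<in>V. \<exists>!b. (v, b) \<in> A)}"

definition partial_assignments :: "var set \<Rightarrow> assignment set" where
  "partial_assignments V = {I. I \<subseteq> lits_of V \<and> \<not> contradictory I}"

definition cnf_size :: "cnf \<Rightarrow> nat" where
  "cnf_size \<Sigma> = sum_list (map length \<Sigma>)"

definition restrict :: "cnf \<Rightarrow> assignment \<Rightarrow> clause set" where
  "restrict \<Sigma> I = set \<Sigma> \<union> {[l] | l. l \<in> I}"

definition clause_sat :: "(var \<Rightarrow> bool) \<Rightarrow> clause \<Rightarrow> bool" where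
  "clause_sat \<tau> c \<longleftrightarrow> (\<exists>(v, b) \<in> set c. \<tau> v = b)"

definition satisfiable :: "clause set \<Rightarrow> bool" where
  "satisfiable F \<longleftrightarrow> (\<exists>\<tau>. \<forall>c\<in>F. clause_sat \<tau> c)"

definition unit_wrt :: "assignment \<Rightarrow> clause \<Rightarrow> lit \<Rightarrow> bool" where
  "unit_wrt U c l \<longleftrightarrow> l \<in> set c \<and> (\<forall>l'\<in>set c. l' \<noteq> l \<longrightarrow> falsifies_lit U l')"

inductive up_reach :: "clause set \<Rightarrow> assignment \<Rightarrow> bool" for F where
  start: "up_reach F {}"
| step: "\<lbrakk>up_reach F U; \<not> contradictory U; c \<in> F; unit_wrt U c l\<rbrakk>
          \<Longrightarrow> up_reach F (insert l U)"

definition up_empty_clause :: "clause set \<Rightarrow> bool" where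
  "up_empty_clause F \<longleftrightarrow> (\<exists>U. up_reach F U \<and> contradictory U)"

definition up_infers :: "clause set \<Rightarrow> lit \<Rightarrow> bool" where
  "up_infers F l \<longleftrightarrow> (\<exists>U. up_reach F U \<and> l \<in> U)"

text \<open>A Boolean constraint: a finite variable set V together with the function h_q,
given as a predicate on assignments (only its values on complete assignments on V matter;
True = sat).\<close>
type_synonym constraint = "var set \<times> (assignment \<Rightarrow> bool)"

definition cvars :: "constraint \<Rightarrow> var set" where
  "cvars q = fst q"

definition satisfies :: "assignment \<Rightarrow> constraint \<Rightarrow> bool" where
  "satisfies A q \<longleftrightarrow> snd q A"

definition falsifies :: "assignment \<Rightarrow> constraint \<Rightarrow> bool" where
  "falsifies I q \<longleftrightarrow>
     (\<forall>A\<in>complete_assignments (cvars q). I \<subseteq> A \<longrightarrow> \<not> satisfies A q)"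

definition is_encoding :: "cnf \<Rightarrow> constraint \<Rightarrow> bool" where
  "is_encoding \<Sigma> q \<longleftrightarrow>
     (\<forall>A\<in>complete_assignments (cvars q). satisfiable (restrict \<Sigma> A) \<longleftrightarrow> satisfies A q)"

definition is_upi :: "cnf \<Rightarrow> constraint \<Rightarrow> bool" where
  "is_upi \<Sigma> q \<longleftrightarrow>
     (\<forall>I\<in>partial_assignments (cvars q). up_empty_clause (restrict \<Sigma> I) \<longleftrightarrow> falsifies I q)"

definition is_upac :: "cnf \<Rightarrow> constraint \<Rightarrow> bool" where
  "is_upac \<Sigma> q \<longleftrightarrow>
     (\<forall>I\<in>partial_assignments (cvars q). \<not> falsifies I q \<longrightarrow>
        (\<forall>\<omega>\<in>lits_of (cvars q). \<omega> \<notin> I \<longrightarrow>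
           \<not> up_empty_clause (restrict \<Sigma> I) \<and>
           (up_infers (restrict \<Sigma> I) \<omega> \<longleftrightarrow> falsifies (insert (neg_lit \<omega>) I) q)))"

end

theory Submission
  imports Defs "HOL-Library.Nat_Bijection"
begin


definition lt :: "(var \<Rightarrow> bool) \<Rightarrow> lit \<Rightarrow> bool" where
  "lt \<tau> l \<longleftrightarrow> \<tau> (fst l) = snd l"

lemma clause_sat_lt: "clause_sat \<tau> c \<longleftrightarrow> (\<exists>l\<in>set c. lt \<tau> l)"
  unfolding clause_sat_def lt_def by (simp add: case_prod_unfold)

lemma sound:
  assumes model: "\<forall>c\<in>F. clause_sat \<tau> c"
  shows "up_reach F U \<Longrightarrow> \<forall>l\<in>U. lt \<tau> l"
proof (induction rule: up_reach.induct)
  case start then show ?case by simp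
next
  case (step U c l)
  then obtain l0 where l0: "l0 \<in> set c" "lt \<tau> l0" using model by (auto simp: clause_sat_lt)
  have "l0 = l"
  proof (rule ccontr)
    assume "l0 \<noteq> l"
    with step.hyps(4) l0(1) have "neg_lit l0 \<in> U" by (auto simp: unit_wrt_def falsifies_lit_def)
    with step.IH have "lt \<tau> (neg_lit l0)" by auto
    with l0(2) show False by (simp add: lt_def neg_lit_def)
  qed
  with l0 step show ?case by auto
qed

lemma sound_nc:
  assumes "\<forall>c\<in>F. clause_sat \<tau> c" "up_reach F U"
  shows "\<not> contradictory U"
proof
  assume "contradictory U"
  then obtain v where "(v,True) \<in> U" "(v,False) \<in> U" by (auto simp: contradictory_def)
  with sound[OF assms] have "lt \<tau> (v,True)" "lt \<tau> (v,False)" by auto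
  then show False by (simp add: lt_def)
qed

lemma up_mono: "up_reach F U \<Longrightarrow> F \<subseteq> G \<Longrightarrow> up_reach G U"
  by (induction rule: up_reach.induct) (auto intro: up_reach.intros)

lemma up_vars: "up_reach F U \<Longrightarrow> l \<in> U \<Longrightarrow> fst l \<in> fst ` (\<Union>c\<in>F. set c)"
  by (induction rule: up_reach.induct) (auto simp: unit_wrt_def)

lemma nc_subset: "J \<subseteq> I \<Longrightarrow> \<not> contradictory I \<Longrightarrow> \<not> contradictory J"
  by (auto simp: contradictory_def)

lemma reach_I: "finite J \<Longrightarrow> J \<subseteq> I \<Longrightarrow> \<not> contradictory I \<Longrightarrow> up_reach (restrict F I) J"
proof (induction J rule: finite_induct)
  case empty then show ?case by (simp add: up_reach.start)
next
  case (insert x J)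
  have "up_reach (restrict F I) J" using insert by auto
  moreover have "\<not> contradictory J" using insert nc_subset by blast
  moreover have "[x] \<in> restrict F I" using insert unfolding restrict_def by blast
  moreover have "unit_wrt J [x] x" by (simp add: unit_wrt_def)
  ultimately show ?case by (rule up_reach.step)
qed

definition lcode :: "lit \<Rightarrow> nat" where "lcode l = 2 * fst l + (if snd l then 1 else 0)"
definition ldec :: "nat \<Rightarrow> lit" where "ldec a = (a div 2, odd a)"
lemma ldec_lcode[simp]: "ldec (lcode l) = l" by (cases l) (auto simp: ldec_def lcode_def)

definition pv :: "nat \<Rightarrow> lit \<Rightarrow> lit \<Rightarrow> var" where
  "pv M w l = M + prod_encode (lcode w, lcode l)"

lemma pv_ge: "M \<le> pv M w l" by (simp add: pv_def)

definition varsc :: "cnf \<Rightarrow> var set" where "varsc S = fst ` set (concat S)"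

definition Mx :: "cnf \<Rightarrow> var set \<Rightarrow> nat" where "Mx S V = Suc (Max (V \<union> varsc S))"

lemma finite_varsc: "finite (varsc S)" by (simp add: varsc_def)

lemma lt_Mx: "finite V \<Longrightarrow> v \<in> V \<union> varsc S \<Longrightarrow> v < Mx S V"
  unfolding Mx_def using finite_varsc by (simp add: le_imp_less_Suc)

definition litsL :: "var set \<Rightarrow> lit list" where
  "litsL V = concat (map (\<lambda>v. [(v,True),(v,False)]) (sorted_list_of_set V))"

lemma set_litsL: "finite V \<Longrightarrow> set (litsL V) = lits_of V"
  by (auto simp: litsL_def lits_of_def)

lemma length_litsL: "finite V \<Longrightarrow> length (litsL V) = 2 * card V"
  by (simp add: litsL_def length_concat o_def sum_list_triv)

definition prop_cls :: "nat \<Rightarrow> lit \<Rightarrow> cnf \<Rightarrow> cnf" where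
  "prop_cls M w S = concat (map (\<lambda>c. map (\<lambda>l. map (\<lambda>l'. (pv M w (neg_lit l'), False)) (filter (\<lambda>l'. l' \<noteq> l) c) @ [(pv M w l, True)]) c) S)"
definition inp_cls :: "nat \<Rightarrow> lit \<Rightarrow> var set \<Rightarrow> cnf" where
  "inp_cls M w V = map (\<lambda>l. [neg_lit l, (pv M w l, True)]) (litsL V)"
definition con_cls :: "nat \<Rightarrow> lit \<Rightarrow> cnf \<Rightarrow> var set \<Rightarrow> cnf" where
  "con_cls M w S V = map (\<lambda>v. [(pv M w (v,True), False), (pv M w (v,False), False), w]) (sorted_list_of_set (V \<union> varsc S))"
definition copy :: "nat \<Rightarrow> lit \<Rightarrow> cnf \<Rightarrow> var set \<Rightarrow> cnf" where
  "copy M w S V = prop_cls M w S @ inp_cls M w V @ [[(pv M w (neg_lit w), True)]] @ con_cls M w S V"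
definition comb :: "cnf \<Rightarrow> var set \<Rightarrow> cnf" where
  "comb S V = S @ concat (map (\<lambda>w. copy (Mx S V) w S V) (litsL V))"

lemma mem_S: "c \<in> set S \<Longrightarrow> c \<in> set (comb S V)"
  by (simp add: comb_def)

lemma mem_copy: "finite V \<Longrightarrow> w \<in> lits_of V \<Longrightarrow> c \<in> set (copy (Mx S V) w S V) \<Longrightarrow> c \<in> set (comb S V)"
  by (auto simp: comb_def set_litsL)

lemma mem_prop: "finite V \<Longrightarrow> w \<in> lits_of V \<Longrightarrow> c \<in> set S \<Longrightarrow> l \<in> set c \<Longrightarrow>
   map (\<lambda>l'. (pv (Mx S V) w (neg_lit l'), False)) (filter (\<lambda>l'. l' \<noteq> l) c) @ [(pv (Mx S V) w l, True)] \<in> set (comb S V)"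
  by (rule mem_copy) (auto simp: copy_def prop_cls_def)

lemma mem_inp: "finite V \<Longrightarrow> w \<in> lits_of V \<Longrightarrow> l \<in> lits_of V \<Longrightarrow>
   [neg_lit l, (pv (Mx S V) w l, True)] \<in> set (comb S V)"
  by (rule mem_copy) (auto simp: copy_def inp_cls_def set_litsL)

lemma mem_unit: "finite V \<Longrightarrow> w \<in> lits_of V \<Longrightarrow> [(pv (Mx S V) w (neg_lit w), True)] \<in> set (comb S V)"
  by (rule mem_copy) (auto simp: copy_def)

lemma mem_con: "finite V \<Longrightarrow> w \<in> lits_of V \<Longrightarrow> v \<in> V \<union> varsc S \<Longrightarrow>
   [(pv (Mx S V) w (v,True), False), (pv (Mx S V) w (v,False), False), w] \<in> set (comb S V)"
  by (rule mem_copy) (auto simp: copy_def con_cls_def finite_varsc)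



lemma finite_lits: "finite V \<Longrightarrow> finite (lits_of V)"
  by (simp add: lits_of_def)

lemma inv_nc:
  assumes fin: "finite V" and I: "I \<subseteq> lits_of V" and nc: "\<not> contradictory I"
    and inv: "\<forall>x\<in>U'. x \<in> I \<or> (snd x \<and> Mx S V \<le> fst x)"
  shows "\<not> contradictory U'"
proof
  assume "contradictory U'"
  then obtain v where vT: "(v,True) \<in> U'" and vF: "(v,False) \<in> U'" by (auto simp: contradictory_def)
  from vF inv have "(v,False) \<in> I" by auto
  with I have "v \<in> V" by (auto simp: lits_of_def)
  with fin have "v < Mx S V" by (simp add: lt_Mx)
  with vT inv have "(v,True) \<in> I" by auto
  with \<open>(v,False) \<in> I\<close> nc show False by (auto simp: contradictory_def)
qed

lemma simulate:
  assumes fin: "finite V" and I: "I \<subseteq> lits_of V" and nc: "\<not> contradictory I"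
    and w: "w \<in> lits_of V"
  shows "up_reach (restrict S (insert (neg_lit w) I)) U \<Longrightarrow>
    \<exists>U'. up_reach (restrict (comb S V) I) U' \<and> I \<subseteq> U' \<and>
         (\<forall>l\<in>U. (pv (Mx S V) w l, True) \<in> U') \<and>
         (\<forall>x\<in>U'. x \<in> I \<or> (snd x \<and> Mx S V \<le> fst x))"
proof (induction rule: up_reach.induct)
  case start
  have "finite I" using fin I finite_lits finite_subset by blast
  then have "up_reach (restrict (comb S V) I) I" using nc by (simp add: reach_I)
  then show ?case by blast
next
  case (step U c l)
  let ?M = "Mx S V"
  from step.IH obtain U' where R: "up_reach (restrict (comb S V) I) U'" and IU: "I \<subseteq> U'"
    and P: "\<forall>l\<in>U. (pv ?M w l, True) \<in> U'" and inv: "\<forall>x\<in>U'. x \<in> I \<or> (snd x \<and> ?M \<le> fst x)"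
    by blast
  have ncU: "\<not> contradictory U'" using inv_nc[OF fin I nc inv] .
  have key: "\<exists>cl. cl \<in> restrict (comb S V) I \<and> unit_wrt U' cl (pv ?M w l, True)"
  proof -
    from step.hyps(3) consider (S) "c \<in> set S" | (u) l0 where "c = [l0]" "l0 \<in> insert (neg_lit w) I"
      unfolding restrict_def by blast
    then show ?thesis
    proof cases
      case S
      have l: "l \<in> set c" using step.hyps(4) by (simp add: unit_wrt_def)
      let ?cl = "map (\<lambda>l'. (pv ?M w (neg_lit l'), False)) (filter (\<lambda>l'. l' \<noteq> l) c) @ [(pv ?M w l, True)]"
      have "?cl \<in> restrict (comb S V) I" using mem_prop[OF fin w S l] by (simp add: restrict_def)
      moreover have "unit_wrt U' ?cl (pv ?M w l, True)"
      proof -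
        have "\<forall>l'\<in>set c. l' \<noteq> l \<longrightarrow> neg_lit l' \<in> U" using step.hyps(4)
          by (auto simp: unit_wrt_def falsifies_lit_def)
        then show ?thesis using P by (auto simp: unit_wrt_def falsifies_lit_def neg_lit_def)
      qed
      ultimately show ?thesis by blast
    next
      case u
      have ll0: "l = l0" using u step.hyps(4) by (simp add: unit_wrt_def)
      show ?thesis
      proof (cases "l0 = neg_lit w")
        case True
        have "[(pv ?M w (neg_lit w), True)] \<in> restrict (comb S V) I"
          using mem_unit[OF fin w] by (simp add: restrict_def)
        then show ?thesis using True ll0 by (auto simp: unit_wrt_def)
      next
        case False
        then have lI: "l \<in> I" using u ll0 by auto
        then have lV: "l \<in> lits_of V" using I by auto
        have "[neg_lit l, (pv ?M w l, True)] \<in> restrict (comb S V) I"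
          using mem_inp[OF fin w lV] by (simp add: restrict_def)
        moreover have "fst l < ?M" using lV fin lt_Mx by (auto simp: lits_of_def)
        then have "neg_lit l \<noteq> (pv ?M w l, True)" using pv_ge[of ?M w l] by (auto simp: neg_lit_def)
        then have "unit_wrt U' [neg_lit l, (pv ?M w l, True)] (pv ?M w l, True)"
          using lI IU by (auto simp: unit_wrt_def falsifies_lit_def neg_lit_def)
        ultimately show ?thesis by blast
      qed
    qed
  qed
  then obtain cl where "cl \<in> restrict (comb S V) I" "unit_wrt U' cl (pv ?M w l, True)" by blast
  then have R2: "up_reach (restrict (comb S V) I) (insert (pv ?M w l, True) U')"
    using R ncU by (rule up_reach.step[rotated 2])
  show ?case
    apply (rule exI[of _ "insert (pv ?M w l, True) U'"])
    using R2 IU P inv pv_ge[of ?M w l] by auto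
qed

lemma complete_inf:
  assumes fin: "finite V" and I: "I \<subseteq> lits_of V" and nc: "\<not> contradictory I"
    and w: "w \<in> lits_of V"
    and E: "up_empty_clause (restrict S (insert (neg_lit w) I))"
  shows "up_infers (restrict (comb S V) I) w"
proof -
  let ?M = "Mx S V"
  from E obtain U where RU: "up_reach (restrict S (insert (neg_lit w) I)) U" and cU: "contradictory U"
    by (auto simp: up_empty_clause_def)
  from simulate[OF fin I nc w RU] obtain U' where R: "up_reach (restrict (comb S V) I) U'"
    and P: "\<forall>l\<in>U. (pv ?M w l, True) \<in> U'" and inv: "\<forall>x\<in>U'. x \<in> I \<or> (snd x \<and> ?M \<le> fst x)"
    by blast
  have ncU: "\<not> contradictory U'" using inv_nc[OF fin I nc inv] .
  from cU obtain v where vT: "(v,True) \<in> U" and vF: "(v,False) \<in> U" by (auto simp: contradictory_def)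
  have "v \<in> fst ` (\<Union>c\<in>restrict S (insert (neg_lit w) I). set c)" using up_vars[OF RU vT] by simp
  then have vV: "v \<in> V \<union> varsc S" using I w
    by (auto simp: restrict_def varsc_def lits_of_def neg_lit_def)
  let ?cl = "[(pv ?M w (v,True), False), (pv ?M w (v,False), False), w]"
  have "?cl \<in> restrict (comb S V) I" using mem_con[OF fin w vV] by (simp add: restrict_def)
  moreover have "fst w < ?M" using w fin lt_Mx by (auto simp: lits_of_def)
  then have "unit_wrt U' ?cl w" using P vT vF pv_ge[of ?M w "(v,True)"] pv_ge[of ?M w "(v,False)"]
    by (auto simp: unit_wrt_def falsifies_lit_def neg_lit_def)
  ultimately have "up_reach (restrict (comb S V) I) (insert w U')"
    using R ncU by (rule up_reach.step[rotated 2])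
  then show ?thesis by (auto simp: up_infers_def)
qed



lemma complete_neg:
  assumes A: "A \<in> complete_assignments V" and w: "w \<in> lits_of V" and "w \<notin> A"
  shows "neg_lit w \<in> A"
proof -
  obtain v b where wv: "w = (v,b)" by (cases w)
  have "v \<in> V" using w wv by (auto simp: lits_of_def)
  then obtain b' where "(v,b') \<in> A" using A by (auto simp: complete_assignments_def)
  then show ?thesis using assms(3) wv by (cases b; cases b') (auto simp: neg_lit_def)
qed

lemma model_comb:
  assumes fin: "finite V" and A: "A \<in> complete_assignments V"
    and t0: "\<forall>c\<in>restrict S A. clause_sat \<tau>0 c"
  shows "satisfiable (restrict (comb S V) A)"
proof -
  let ?M = "Mx S V"
  define \<tau> where "\<tau> x = (if x < ?M then \<tau>0 x else
        (case prod_decode (x - ?M) of (a,b) \<Rightarrow> ldec a \<in> A \<or> lt \<tau>0 (ldec b)))" for x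
  have tpv: "\<tau> (pv ?M w l) = (w \<in> A \<or> lt \<tau>0 l)" for w l
    by (simp add: \<tau>_def pv_def)
  have AV: "A \<subseteq> lits_of V" using A by (auto simp: complete_assignments_def)
  have small: "fst l < ?M \<Longrightarrow> lt \<tau> l = lt \<tau>0 l" for l by (simp add: lt_def \<tau>_def)
  have smallV: "l \<in> lits_of V \<Longrightarrow> fst l < ?M" for l using fin lt_Mx by (auto simp: lits_of_def)
  have unitA: "l \<in> A \<Longrightarrow> lt \<tau>0 l" for l
  proof -
    assume "l \<in> A" then have "[l] \<in> restrict S A" unfolding restrict_def by blast
    then show ?thesis using t0 by (auto simp: clause_sat_lt)
  qed
  have satS: "c \<in> set S \<Longrightarrow> \<exists>l\<in>set c. lt \<tau>0 l" for c using t0 by (auto simp: restrict_def clause_sat_lt)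
  have Svars: "c \<in> set S \<Longrightarrow> l \<in> set c \<Longrightarrow> fst l < ?M" for c l
    using fin lt_Mx[of V "fst l" S] by (auto simp: varsc_def)
  have ntpv: "\<not> lt \<tau> (pv ?M w l, False) \<longleftrightarrow> (w \<in> A \<or> lt \<tau>0 l)" for w l
    by (simp add: lt_def tpv)
  have "\<forall>c\<in>restrict (comb S V) A. clause_sat \<tau> c"
  proof
    fix c assume c: "c \<in> restrict (comb S V) A"
    then consider (S) "c \<in> set S" | (A) l where "c = [l]" "l \<in> A"
      | (cp) w where "w \<in> lits_of V" "c \<in> set (copy ?M w S V)"
    proof -
      assume h1: "c \<in> set S \<Longrightarrow> thesis" and h2: "\<And>l. c = [l] \<Longrightarrow> l \<in> A \<Longrightarrow> thesis"
        and h3: "\<And>w. w \<in> lits_of V \<Longrightarrow> c \<in> set (copy ?M w S V) \<Longrightarrow> thesis"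
      from c have "c \<in> set S \<or> (\<exists>l. c = [l] \<and> l \<in> A) \<or> (\<exists>w\<in>set (litsL V). c \<in> set (copy ?M w S V))"
        unfolding restrict_def comb_def by auto
      then show thesis using h1 h2 h3 set_litsL[OF fin] by blast
    qed
    then show "clause_sat \<tau> c"
    proof cases
      case S
      then obtain l where "l \<in> set c" "lt \<tau>0 l" using satS by blast
      then show ?thesis using small Svars S by (auto simp: clause_sat_lt)
    next
      case A
      then have "l \<in> lits_of V" using AV by auto
      then have "lt \<tau> l" using small smallV unitA A by metis
      then show ?thesis using A by (simp add: clause_sat_lt)
    next
      case cp
      note w = cp(1)
      consider (pr) "c \<in> set (prop_cls ?M w S)" | (inp) "c \<in> set (inp_cls ?M w V)"
        | (un) "c = [(pv ?M w (neg_lit w), True)]" | (con) "c \<in> set (con_cls ?M w S V)"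
        using cp(2) by (auto simp: copy_def)
      then show ?thesis
      proof cases
        case pr
        then obtain d l where d: "d \<in> set S" "l \<in> set d" and
          c: "c = map (\<lambda>l'. (pv ?M w (neg_lit l'), False)) (filter (\<lambda>l'. l' \<noteq> l) d) @ [(pv ?M w l, True)]"
          by (auto simp: prop_cls_def)
        show ?thesis
        proof (cases "w \<in> A \<or> lt \<tau>0 l")
          case True
          then have "lt \<tau> (pv ?M w l, True)" by (simp add: lt_def tpv)
          moreover have "(pv ?M w l, True) \<in> set c" using c by simp
          ultimately show ?thesis by (auto simp: clause_sat_lt)
        next
          case False
          obtain l' where l': "l' \<in> set d" "lt \<tau>0 l'" using satS d by blast
          with False have "l' \<noteq> l" by auto
          have "\<not> lt \<tau>0 (neg_lit l')" using l' by (simp add: lt_def neg_lit_def)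
          then have "lt \<tau> (pv ?M w (neg_lit l'), False)" using False by (simp add: lt_def tpv)
          moreover have "(pv ?M w (neg_lit l'), False) \<in> set c" using c l' \<open>l' \<noteq> l\<close> by auto
          ultimately show ?thesis by (auto simp: clause_sat_lt)
        qed
      next
        case inp
        then obtain l where l: "l \<in> lits_of V" and c: "c = [neg_lit l, (pv ?M w l, True)]"
          using set_litsL[OF fin] by (auto simp: inp_cls_def)
        have "fst (neg_lit l) < ?M" using smallV[OF l] by (simp add: neg_lit_def)
        then have e: "lt \<tau> (neg_lit l) = (\<not> lt \<tau>0 l)" using small[of "neg_lit l"] by (simp add: lt_def neg_lit_def)
        have "lt \<tau> (pv ?M w l, True) = (w \<in> A \<or> lt \<tau>0 l)" by (simp add: lt_def tpv)
        then show ?thesis using c e by (auto simp: clause_sat_lt)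
      next
        case un
        show ?thesis
        proof (cases "w \<in> A")
          case True
          then have "lt \<tau> (pv ?M w (neg_lit w), True)" by (simp add: lt_def tpv)
          then show ?thesis using un by (simp add: clause_sat_lt)
        next
          case False
          then have "neg_lit w \<in> A" using complete_neg[OF A w] by simp
          then have "lt \<tau> (pv ?M w (neg_lit w), True)" using unitA by (simp add: lt_def tpv)
          then show ?thesis using un by (simp add: clause_sat_lt)
        qed
      next
        case con
        then obtain v where c: "c = [(pv ?M w (v,True), False), (pv ?M w (v,False), False), w]"
          by (auto simp: con_cls_def)
        show ?thesis
        proof (cases "w \<in> A")
          case True
          then have "lt \<tau> w" using unitA small smallV[OF w] by metis
          then show ?thesis using c by (simp add: clause_sat_lt)
        next
          case False
          have "lt \<tau> (pv ?M w (v,True), False) \<or> lt \<tau> (pv ?M w (v,False), False)"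
            using False by (simp add: lt_def tpv)
          then show ?thesis using c by (auto simp: clause_sat_lt)
        qed
      qed
    qed
  qed
  then show ?thesis by (auto simp: satisfiable_def)
qed



lemma sat_sub: "F \<subseteq> G \<Longrightarrow> satisfiable G \<Longrightarrow> satisfiable F"
  by (auto simp: satisfiable_def)

lemma restrict_mono: "set S \<subseteq> set T \<Longrightarrow> I \<subseteq> J \<Longrightarrow> restrict S I \<subseteq> restrict T J"
  by (auto simp: restrict_def)

lemma set_comb: "set S \<subseteq> set (comb S V)" by (auto simp: comb_def)

lemma props:
  assumes fin: "finite (cvars q)" and enc: "is_encoding S q" and upi: "is_upi S q"
  shows "is_encoding (comb S (cvars q)) q \<and> is_upi (comb S (cvars q)) q \<and> is_upac (comb S (cvars q)) q"
proof -
  let ?V = "cvars q"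
  let ?C = "comb S ?V"
  have encC: "is_encoding ?C q"
    unfolding is_encoding_def
  proof
    fix A assume A: "A \<in> complete_assignments ?V"
    have "satisfiable (restrict ?C A) \<longleftrightarrow> satisfiable (restrict S A)"
    proof
      assume "satisfiable (restrict ?C A)"
      then show "satisfiable (restrict S A)" using sat_sub[OF restrict_mono[OF set_comb order_refl]] by blast
    next
      assume "satisfiable (restrict S A)"
      then obtain \<tau>0 where "\<forall>c\<in>restrict S A. clause_sat \<tau>0 c" by (auto simp: satisfiable_def)
      then show "satisfiable (restrict ?C A)" using model_comb[OF fin A] by blast
    qed
    then show "satisfiable (restrict ?C A) \<longleftrightarrow> satisfies A q" using enc A by (simp add: is_encoding_def)
  qed
  have nf: "\<exists>A\<in>complete_assignments ?V. J \<subseteq> A \<and> (\<exists>\<tau>. \<forall>c\<in>restrict ?C A. clause_sat \<tau> c)"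
    if "\<not> falsifies J q" for J
  proof -
    from that obtain A where A: "A \<in> complete_assignments ?V" "J \<subseteq> A" "satisfies A q"
      by (auto simp: falsifies_def)
    then have "satisfiable (restrict ?C A)" using encC by (simp add: is_encoding_def)
    then show ?thesis using A by (auto simp: satisfiable_def)
  qed
  have upiC: "is_upi ?C q"
    unfolding is_upi_def
  proof
    fix I assume I: "I \<in> partial_assignments ?V"
    show "up_empty_clause (restrict ?C I) \<longleftrightarrow> falsifies I q"
    proof
      assume E: "up_empty_clause (restrict ?C I)"
      show "falsifies I q"
      proof (rule ccontr)
        assume "\<not> falsifies I q"
        from nf[OF this] obtain A \<tau> where "I \<subseteq> A" "\<forall>c\<in>restrict ?C A. clause_sat \<tau> c" by blast
        then have M: "\<forall>c\<in>restrict ?C I. clause_sat \<tau> c" using restrict_mono[of ?C ?C I A] by blast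
        from E obtain U where "up_reach (restrict ?C I) U" "contradictory U" by (auto simp: up_empty_clause_def)
        with sound_nc[OF M] show False by blast
      qed
    next
      assume "falsifies I q"
      then have "up_empty_clause (restrict S I)" using upi I by (simp add: is_upi_def)
      then obtain U where U: "up_reach (restrict S I) U" "contradictory U" by (auto simp: up_empty_clause_def)
      have "restrict S I \<subseteq> restrict ?C I" by (rule restrict_mono[OF set_comb order_refl])
      with U have "up_reach (restrict ?C I) U" using up_mono by blast
      with U show "up_empty_clause (restrict ?C I)" by (auto simp: up_empty_clause_def)
    qed
  qed
  have upacC: "is_upac ?C q"
    unfolding is_upac_def
  proof (intro ballI impI conjI)
    fix I w assume I: "I \<in> partial_assignments ?V" and nfI: "\<not> falsifies I q"
      and w: "w \<in> lits_of ?V" and wI: "w \<notin> I"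
    show "\<not> up_empty_clause (restrict ?C I)" using upiC I nfI by (simp add: is_upi_def)
    have IV: "I \<subseteq> lits_of ?V" and ncI: "\<not> contradictory I" using I by (auto simp: partial_assignments_def)
    show "up_infers (restrict ?C I) w \<longleftrightarrow> falsifies (insert (neg_lit w) I) q"
    proof
      assume inf: "up_infers (restrict ?C I) w"
      show "falsifies (insert (neg_lit w) I) q"
      proof (rule ccontr)
        assume "\<not> falsifies (insert (neg_lit w) I) q"
        from nf[OF this] obtain A \<tau> where A: "insert (neg_lit w) I \<subseteq> A" "\<forall>c\<in>restrict ?C A. clause_sat \<tau> c" by blast
        then have M: "\<forall>c\<in>restrict ?C I. clause_sat \<tau> c" using restrict_mono[of ?C ?C I A] by blast
        from inf obtain U where "up_reach (restrict ?C I) U" "w \<in> U" by (auto simp: up_infers_def)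
        with sound[OF M] have "lt \<tau> w" by blast
        moreover have "[neg_lit w] \<in> restrict ?C A" using A(1) unfolding restrict_def by blast
        then have "lt \<tau> (neg_lit w)" using A(2) by (auto simp: clause_sat_lt)
        ultimately show False by (simp add: lt_def neg_lit_def)
      qed
    next
      assume F: "falsifies (insert (neg_lit w) I) q"
      have nw: "neg_lit w \<in> lits_of ?V" using w by (auto simp: lits_of_def neg_lit_def)
      have "\<not> contradictory (insert (neg_lit w) I)"
      proof
        assume "contradictory (insert (neg_lit w) I)"
        then obtain v where "(v,True) \<in> insert (neg_lit w) I" "(v,False) \<in> insert (neg_lit w) I"
          by (auto simp: contradictory_def)
        then show False using ncI wI by (cases w; cases "snd w") (auto simp: contradictory_def neg_lit_def)
      qed
      then have "insert (neg_lit w) I \<in> partial_assignments ?V" using IV nw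
        by (auto simp: partial_assignments_def)
      then have "up_empty_clause (restrict S (insert (neg_lit w) I))" using upi F by (simp add: is_upi_def)
      then show "up_infers (restrict ?C I) w" using complete_inf[OF fin IV ncI w] by blast
    qed
  qed
  show ?thesis using encC upiC upacC by blast
qed



lemma cs_app[simp]: "cnf_size (a @ b) = cnf_size a + cnf_size b" by (simp add: cnf_size_def)
lemma cs_concat: "cnf_size (concat xs) = sum_list (map cnf_size xs)"
  by (induction xs) (auto simp: cnf_size_def)
lemma bound_sum: "(\<forall>x\<in>set xs. f x \<le> (B::nat)) \<Longrightarrow> sum_list (map f xs) \<le> length xs * B"
  by (induction xs) auto
lemma sum_len_mult: "sum_list (map (\<lambda>c. length c * k) S) = cnf_size S * k"
  by (induction S) (auto simp: cnf_size_def algebra_simps)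
lemma len_le: "c \<in> set S \<Longrightarrow> length c \<le> cnf_size S"
  unfolding cnf_size_def by (simp add: member_le_sum_list)

lemma size_prop: "cnf_size (prop_cls M w S) \<le> cnf_size S * (cnf_size S + 1)"
proof -
  let ?s = "cnf_size S"
  let ?g = "\<lambda>c. map (\<lambda>l. map (\<lambda>l'. (pv M w (neg_lit l'), False)) (filter (\<lambda>l'. l' \<noteq> l) c) @ [(pv M w l, True)]) c"
  have "cnf_size (prop_cls M w S) = sum_list (map (\<lambda>c. cnf_size (?g c)) S)"
    by (simp add: prop_cls_def cs_concat o_def)
  also have "\<dots> \<le> sum_list (map (\<lambda>c. length c * (?s + 1)) S)"
  proof (rule sum_list_mono)
    fix c assume c: "c \<in> set S"
    have "cnf_size (?g c) = sum_list (map (\<lambda>l. length (filter (\<lambda>l'. l' \<noteq> l) c) + 1) c)"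
      by (simp add: cnf_size_def o_def)
    also have "\<dots> \<le> length c * (?s + 1)"
      by (rule bound_sum) (use len_le[OF c] in \<open>auto intro: order_trans[OF length_filter_le]\<close>)
    finally show "cnf_size (?g c) \<le> length c * (?s + 1)" .
  qed
  also have "\<dots> = ?s * (?s + 1)" by (rule sum_len_mult)
  finally show ?thesis .
qed

lemma size_inp: "finite V \<Longrightarrow> cnf_size (inp_cls M w V) = 4 * card V"
  by (simp add: inp_cls_def cnf_size_def o_def sum_list_triv length_litsL)

lemma card_varsc: "card (varsc S) \<le> cnf_size S"
proof -
  have "card (varsc S) \<le> card (set (concat S))" unfolding varsc_def by (rule card_image_le) simp
  also have "\<dots> \<le> length (concat S)" by (rule card_length)
  also have "\<dots> = cnf_size S" by (simp add: cnf_size_def length_concat)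
  finally show ?thesis .
qed

lemma size_con: "finite V \<Longrightarrow> cnf_size (con_cls M w S V) \<le> 3 * (card V + cnf_size S)"
proof -
  assume fin: "finite V"
  have "cnf_size (con_cls M w S V) = 3 * card (V \<union> varsc S)"
    using fin finite_varsc by (simp add: con_cls_def cnf_size_def o_def sum_list_triv)
  also have "card (V \<union> varsc S) \<le> card V + cnf_size S"
    using card_Un_le[of V "varsc S"] card_varsc[of S] by linarith
  finally show ?thesis by simp
qed

lemma size_copy: "finite V \<Longrightarrow> cnf_size (copy M w S V) \<le> cnf_size S * cnf_size S + 4 * cnf_size S + 7 * card V + 1"
proof -
  assume fin: "finite V"
  have "cnf_size (copy M w S V) = cnf_size (prop_cls M w S) + cnf_size (inp_cls M w V) + 1 + cnf_size (con_cls M w S V)"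
    by (simp add: copy_def cnf_size_def)
  then show ?thesis using size_prop[of M w S] size_inp[OF fin, of M w] size_con[OF fin, of M w S]
    by (simp add: algebra_simps)
qed

lemma size_comb: "finite V \<Longrightarrow> cnf_size (comb S V) \<le>
   cnf_size S + 2 * card V * (cnf_size S * cnf_size S + 4 * cnf_size S + 7 * card V + 1)"
proof -
  assume fin: "finite V"
  have "cnf_size (comb S V) = cnf_size S + sum_list (map (\<lambda>w. cnf_size (copy (Mx S V) w S V)) (litsL V))"
    by (simp add: comb_def cs_concat o_def)
  also have "sum_list (map (\<lambda>w. cnf_size (copy (Mx S V) w S V)) (litsL V)) \<le>
      length (litsL V) * (cnf_size S * cnf_size S + 4 * cnf_size S + 7 * card V + 1)"
    by (rule bound_sum) (use size_copy[OF fin] in blast)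
  finally show ?thesis by (simp add: length_litsL[OF fin])
qed

theorem mainTheorem3:
  fixes Q :: "constraint set"
  assumes fin: "\<forall>q\<in>Q. finite (cvars q)"
    and upi: "\<exists>P :: nat poly. \<forall>q\<in>Q. \<exists>\<Sigma>.
               is_encoding \<Sigma> q \<and> is_upi \<Sigma> q \<and> cnf_size \<Sigma> \<le> poly P (card (cvars q))"
  shows "\<exists>P' :: nat poly. \<forall>q\<in>Q. \<exists>\<Sigma>.
           is_encoding \<Sigma> q \<and> is_upi \<Sigma> q \<and> is_upac \<Sigma> q \<and>
           cnf_size \<Sigma> \<le> poly P' (card (cvars q))"
proof -
  from upi obtain P :: "nat poly" where hP: "\<forall>q\<in>Q. \<exists>\<Sigma>.
               is_encoding \<Sigma> q \<and> is_upi \<Sigma> q \<and> cnf_size \<Sigma> \<le> poly P (card (cvars q))" by blast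
  define P' where "P' = P + [:0,2:] * (P * P + smult 4 P + [:1,7:])"
  have evP': "poly P' n = poly P n + 2 * n * (poly P n * poly P n + 4 * poly P n + 7 * n + 1)" for n
    by (simp add: P'_def algebra_simps)
  show ?thesis
  proof (rule exI[of _ P'], intro ballI)
    fix q assume q: "q \<in> Q"
    then obtain S where S: "is_encoding S q" "is_upi S q" "cnf_size S \<le> poly P (card (cvars q))"
      using hP by blast
    have f: "finite (cvars q)" using fin q by blast
    let ?s = "cnf_size S" and ?p = "poly P (card (cvars q))" and ?n = "card (cvars q)"
    have "cnf_size (comb S (cvars q)) \<le> ?s + 2 * ?n * (?s * ?s + 4 * ?s + 7 * ?n + 1)"
      by (rule size_comb[OF f])
    also have "\<dots> \<le> ?p + 2 * ?n * (?p * ?p + 4 * ?p + 7 * ?n + 1)"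
      using S(3) by (intro add_mono mult_le_mono order_refl) auto
    also have "\<dots> = poly P' ?n" by (simp add: evP')
    finally show "\<exists>\<Sigma>. is_encoding \<Sigma> q \<and> is_upi \<Sigma> q \<and> is_upac \<Sigma> q \<and> cnf_size \<Sigma> \<le> poly P' ?n"
      using props[OF f S(1) S(2)] by blast
  qed
qed


end
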